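(* Let $G$ be a connected Lie group with Lie algebra $\mathfrak{su}(2)\oplus\mathbb{R}$ having basis $E_1,E_2,E_3,E_4$ with $[E_1,E_2]=E_3$, $[E_2,E_3]=E_1$, $[E_3,E_1]=E_2$, $[E_i,E_4]=0$ ($i=1,2,3$). For $(\alpha_1,\alpha_2,\alpha_3)\in\mathbb{R}^3$, $\beta,t\in\mathbb{R}$ define $$\gamma_1(\alpha_1,\alpha_2,\alpha_3,\beta;t)=\exp\bigl(t(\alpha_1E_1+\alpha_2(E_4-E_3)+\alpha_3E_2+\beta E_3)\bigr)\exp(-t\beta E_3),$$ $$\gamma_2(\alpha_1,\alpha_2,\alpha_3,\beta;t)=\exp\bigl(t(\alpha_1E_1+\alpha_2E_4+\alpha_3E_2+\beta E_3)\bigr)\exp(-t\beta E_3).$$ Then for all $(\alpha_1,\alpha_2,\alpha_3)\in\mathbb{S}^2$, $\beta\in\mathbb{R}$ and $t\in\mathbb{R}$, $$\gamma_1(\alpha_1,\alpha_2,\alpha_3,\beta;t)=\gamma_2(\alpha_1,\alpha_2,\alpha_3,\beta-\alpha_2;t)\exp(-t\alpha_2E_3).$$ *)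

theory Defs
  imports "HOL-Analysis.Analysis" "HOL-Algebra.Group"
begin

text \<open>The Lie algebra su(2) + R, realised on real^4 with coordinates w.r.t. the
basis E1,E2,E3,E4.\<close>

definition E1 :: "real^4" where "E1 = axis 1 1"
definition E2 :: "real^4" where "E2 = axis 2 1"
definition E3 :: "real^4" where "E3 = axis 3 1"
definition E4 :: "real^4" where "E4 = axis 4 1"

text \<open>Bracket determined by [E1,E2]=E3, [E2,E3]=E1, [E3,E1]=E2, [Ei,E4]=0.\<close>
definition su2R_bracket :: "real^4 \<Rightarrow> real^4 \<Rightarrow> real^4" where
  "su2R_bracket X Y = vector
     [X$2 * Y$3 - X$3 * Y$2, X$3 * Y$1 - X$1 * Y$3, X$1 * Y$2 - X$2 * Y$1, 0]"

text \<open>Abstract interface of a Lie group G with Lie algebra su(2)+R and its exponential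
map: expm maps the algebra into G, every line t \<mapsto> expm (t X) is a one-parameter
subgroup, and expm (X+Y) = expm X expm Y for commuting X, Y.\<close>
definition su2R_lie_group_exp ::
  "('g, 'b) monoid_scheme \<Rightarrow> (real^4 \<Rightarrow> 'g) \<Rightarrow> bool" where
  "su2R_lie_group_exp G expm \<longleftrightarrow>
     group G \<and> (\<forall>X. expm X \<in> carrier G) \<and>
     (\<forall>X s t. expm ((s + t) *\<^sub>R X) = expm (s *\<^sub>R X) \<otimes>\<^bsub>G\<^esub> expm (t *\<^sub>R X)) \<and>
     (\<forall>X Y. su2R_bracket X Y = 0 \<longrightarrow> expm (X + Y) = expm X \<otimes>\<^bsub>G\<^esub> expm Y)"

definition gamma1 ::
  "('g, 'b) monoid_scheme \<Rightarrow> (real^4 \<Rightarrow> 'g) \<Rightarrow> real \<Rightarrow> real \<Rightarrow> real \<Rightarrow> real \<Rightarrow> real \<Rightarrow> 'g" where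
  "gamma1 G expm a1 a2 a3 b t =
     expm (t *\<^sub>R (a1 *\<^sub>R E1 + a2 *\<^sub>R (E4 - E3) + a3 *\<^sub>R E2 + b *\<^sub>R E3))
       \<otimes>\<^bsub>G\<^esub> expm ((- t * b) *\<^sub>R E3)"

definition gamma2 ::
  "('g, 'b) monoid_scheme \<Rightarrow> (real^4 \<Rightarrow> 'g) \<Rightarrow> real \<Rightarrow> real \<Rightarrow> real \<Rightarrow> real \<Rightarrow> real \<Rightarrow> 'g" where
  "gamma2 G expm a1 a2 a3 b t =
     expm (t *\<^sub>R (a1 *\<^sub>R E1 + a2 *\<^sub>R E4 + a3 *\<^sub>R E2 + b *\<^sub>R E3))
       \<otimes>\<^bsub>G\<^esub> expm ((- t * b) *\<^sub>R E3)"

end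

theory Submission
  imports Defs
begin

theorem proposition1:
  fixes G :: "('g, 'b) monoid_scheme" and expm :: "real^4 \<Rightarrow> 'g"
    and a1 a2 a3 b t :: real
  assumes "su2R_lie_group_exp G expm"
    and "a1\<^sup>2 + a2\<^sup>2 + a3\<^sup>2 = 1"
  shows "gamma1 G expm a1 a2 a3 b t =
         gamma2 G expm a1 a2 a3 (b - a2) t \<otimes>\<^bsub>G\<^esub> expm ((- t * a2) *\<^sub>R E3)"
proof -
  have grp: "group G" and car: "\<And>X. expm X \<in> carrier G"
    and one: "\<And>X s t. expm ((s + t) *\<^sub>R X) = expm (s *\<^sub>R X) \<otimes>\<^bsub>G\<^esub> expm (t *\<^sub>R X)"
    using assms(1) unfolding su2R_lie_group_exp_def by auto
  have veq: "t *\<^sub>R (a1 *\<^sub>R E1 + a2 *\<^sub>R (E4 - E3) + a3 *\<^sub>R E2 + b *\<^sub>R E3)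
     = t *\<^sub>R (a1 *\<^sub>R E1 + a2 *\<^sub>R E4 + a3 *\<^sub>R E2 + (b - a2) *\<^sub>R E3)"
    by (simp add: algebra_simps)
  have e: "expm ((- t * b) *\<^sub>R E3) = expm ((- t * (b - a2)) *\<^sub>R E3) \<otimes>\<^bsub>G\<^esub> expm ((- t * a2) *\<^sub>R E3)"
    using one[of "- t * (b - a2)" "- t * a2" E3] by (simp add: algebra_simps)
  show ?thesis
    unfolding gamma1_def gamma2_def veq e
    using monoid.m_assoc[OF group.is_monoid[OF grp] car car car] by simp
qed

end
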